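(* In the setting described in the context, if the parametrisation $\mathcal P_0=(X,\Theta)$ is partially tight in parameter (PTIP), then $\mathcal P_0$ is uniformly ergodic. Likewise, if $\mathcal P_1=(\tilde X,\Theta)$ is PTIP, then $\mathcal P_1$ is uniformly ergodic.
   Context: Fix an observed value $y\in\mathbb R$. Consider the model $Y=X+Z_1$, $X=\Theta+Z_2$, where $Z_1,Z_2$ are independent real random variables, independent of $\Theta$, whose distributions are symmetric about $0$ and have continuous, bounded, everywhere positive Lebesgue densities $f_1,f_2$; $\Theta$ is given the improper flat (Lebesgue) prior on $\mathbb R$, and the posterior $\mathcal L(X,\Theta\mid Y=y)$ is proper. Write $\tilde X=X-\Theta$. For a parametrisation $\mathcal P=(U,\Theta)$ with $U\in\{X,\tilde X\}$, the Gibbs sampler started at $\Theta_0$ iterates, for $n\ge1$: draw $U_n\sim\mathcal L(U\mid Y=y,\Theta=\Theta_{n-1})$, then $\Theta_n\sim\mathcal L(\Theta\mid Y=y,U=U_n)$. The centred parametrisation is $\mathcal P_0=(X,\Theta)$ and the non-centred one is $\mathcal P_1=(\tilde X,\Theta)$. A parametrisation is called geometrically ergodic if its marginal chain $\{\Theta_n\}$ satisfies $\|\mathcal L(\Theta_n\mid Y=y,\Theta_0)-\mathcal L(\Theta\mid Y=y)\|_{TV}\le M(\Theta_0)r^n$ for all $n$, for some $r<1$ and some function $M$; it is called uniformly ergodic if in addition $M$ can be taken bounded. A parametrisation $(U,\Theta)$ is PTIP (partially tight in parameter) if for every $y$ there is $k>0$ with $\limsup_{|\theta|\to\infty}\mathbf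 P(|U|>k\mid Y=y,\Theta=\theta)<1$. *)

theory Defs
  imports "HOL-Probability.Probability"
begin

text \<open>Unnormalised joint posterior density of (X, Theta) given Y = y, for the model
  Y = X + Z1, X = Theta + Z2 with flat prior on Theta (centred parametrisation P0).\<close>
definition post0 :: "(real \<Rightarrow> real) \<Rightarrow> (real \<Rightarrow> real) \<Rightarrow> real \<Rightarrow> real \<Rightarrow> real \<Rightarrow> real" where
  "post0 f1 f2 y x \<theta> = f1 (y - x) * f2 (x - \<theta>)"

text \<open>Joint posterior density of (Xtilde, Theta) given Y = y, Xtilde = X - Theta
  (non-centred parametrisation P1); the change of variables has Jacobian 1.\<close>
definition post1 :: "(real \<Rightarrow> real) \<Rightarrow> (real \<Rightarrow> real) \<Rightarrow> real \<Rightarrow> real \<Rightarrow> real \<Rightarrow> real" where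
  "post1 f1 f2 y u \<theta> = post0 f1 f2 y (u + \<theta>) \<theta>"

definition cond_U :: "(real \<Rightarrow> real \<Rightarrow> real) \<Rightarrow> real \<Rightarrow> real measure" where
  "cond_U p \<theta> = density lborel
     (\<lambda>u. ennreal (p u \<theta>) / (\<integral>\<^sup>+ v. ennreal (p v \<theta>) \<partial>lborel))"

definition cond_Theta :: "(real \<Rightarrow> real \<Rightarrow> real) \<Rightarrow> real \<Rightarrow> real measure" where
  "cond_Theta p u = density lborel
     (\<lambda>\<theta>. ennreal (p u \<theta>) / (\<integral>\<^sup>+ t. ennreal (p u t) \<partial>lborel))"

definition marg_Theta :: "(real \<Rightarrow> real \<Rightarrow> real) \<Rightarrow> real measure" where
  "marg_Theta p = density lborel
     (\<lambda>\<theta>. (\<integral>\<^sup>+ u. ennreal (p u \<theta>) \<partial>lborel) /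
            (\<integral>\<^sup>+ t. \<integral>\<^sup>+ u. ennreal (p u t) \<partial>lborel \<partial>lborel))"

definition gibbs_step :: "(real \<Rightarrow> real \<Rightarrow> real) \<Rightarrow> real \<Rightarrow> real measure" where
  "gibbs_step p \<theta> = bind (cond_U p \<theta>) (cond_Theta p)"

fun gibbs_dist :: "(real \<Rightarrow> real \<Rightarrow> real) \<Rightarrow> real \<Rightarrow> nat \<Rightarrow> real measure" where
  "gibbs_dist p \<theta>0 0 = return borel \<theta>0"
| "gibbs_dist p \<theta>0 (Suc n) = bind (gibbs_dist p \<theta>0 n) (gibbs_step p)"

definition tv_dist :: "real measure \<Rightarrow> real measure \<Rightarrow> real" where
  "tv_dist M N = (SUP A \<in> sets borel. \<bar>measure M A - measure N A\<bar>)"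

definition geometrically_ergodic :: "(real \<Rightarrow> real \<Rightarrow> real) \<Rightarrow> bool" where
  "geometrically_ergodic p \<longleftrightarrow> (\<exists>r M. 0 \<le> r \<and> r < 1 \<and>
     (\<forall>\<theta>0 n. tv_dist (gibbs_dist p \<theta>0 n) (marg_Theta p) \<le> M \<theta>0 * r ^ n))"

definition uniformly_ergodic :: "(real \<Rightarrow> real \<Rightarrow> real) \<Rightarrow> bool" where
  "uniformly_ergodic p \<longleftrightarrow> (\<exists>r M. 0 \<le> r \<and> r < 1 \<and> bounded (range M) \<and>
     (\<forall>\<theta>0 n. tv_dist (gibbs_dist p \<theta>0 n) (marg_Theta p) \<le> M \<theta>0 * r ^ n))"

text \<open>PTIP for a parametrisation given by its posterior densities P y (for every y).\<close>
definition PTIP :: "(real \<Rightarrow> real \<Rightarrow> real \<Rightarrow> real) \<Rightarrow> bool" where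
  "PTIP P \<longleftrightarrow> (\<forall>y. \<exists>k>0.
     Limsup at_infinity (\<lambda>\<theta>. ereal (measure (cond_U (P y) \<theta>) {u. k < \<bar>u\<bar>})) < 1)"

end

theory Submission
  imports Defs
begin


lemma A1:
  fixes g :: "real \<Rightarrow> real" assumes g0: "\<And>x. 0 \<le> g x"
  shows "(\<integral>\<^sup>+t. indicator {(x,t). 0 \<le> t \<and> t < g x} (x,t) \<partial>lborel) = ennreal (g x)"
proof -
    have "(\<integral>\<^sup>+t. indicator {(x,t). 0 \<le> t \<and> t < g x} (x,t) \<partial>lborel) = (\<integral>\<^sup>+t. indicator {0..<g x} t \<partial>lborel)"
      by (intro nn_integral_cong) (simp split: split_indicator)
    also have "\<dots> = ennreal (g x)" using g0[of x] by simp
    finally show ?thesis .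
qed
lemma A2:
  fixes g :: "real \<Rightarrow> real"
  assumes nu: "prob_space \<nu>" "sets \<nu> = sets borel"
    and g[measurable]: "g \<in> borel_measurable borel"
  shows "(\<integral>\<^sup>+x. indicator {(x,t). 0 \<le> t \<and> t < g x} (x,t) \<partial>\<nu>) = emeasure \<nu> {x. t < g x} * indicator {0..} t"
proof -
  have "(\<integral>\<^sup>+x. indicator {(x,t). 0 \<le> t \<and> t < g x} (x,t) \<partial>\<nu>) = (\<integral>\<^sup>+x. indicator {x. t < g x} x * indicator {0..} t \<partial>\<nu>)"
      by (intro nn_integral_cong) (simp split: split_indicator)
  also have "\<dots> = emeasure \<nu> {x. t < g x} * indicator {0..} t"
  proof -
    have "{x. t < g x} \<in> sets borel" by measurable
    then have "{x. t < g x} \<in> sets \<nu>" using nu by simp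
    then show ?thesis by (simp add: nn_integral_multc)
  qed
  finally show ?thesis .
qed
lemma A3:
  fixes g :: "real \<Rightarrow> real"
  assumes nu: "prob_space \<nu>" "sets \<nu> = sets borel"
    and g[measurable]: "g \<in> borel_measurable borel"
  shows "(\<integral>\<^sup>+x. \<integral>\<^sup>+t. indicator {(x,t). 0 \<le> t \<and> t < g x} (x,t) \<partial>lborel \<partial>\<nu>) = (\<integral>\<^sup>+t. \<integral>\<^sup>+x. indicator {(x,t). 0 \<le> t \<and> t < g x} (x,t) \<partial>\<nu> \<partial>lborel)"
proof -
  interpret prob_space \<nu> by fact
  interpret P: pair_sigma_finite \<nu> lborel
    by (intro pair_sigma_finite.intro sigma_finite_measure_axioms) (rule lborel.sigma_finite_measure_axioms)
  have "Measurable.pred (borel \<Otimes>\<^sub>M borel) (\<lambda>z::real\<times>real. 0 \<le> snd z \<and> snd z < g (fst z))" by measurable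
  then have "{z \<in> space (borel \<Otimes>\<^sub>M borel). 0 \<le> snd z \<and> snd z < g (fst z)} \<in> sets (borel \<Otimes>\<^sub>M borel)"
    by (simp add: pred_def)
  moreover have "{z \<in> space (borel \<Otimes>\<^sub>M borel). 0 \<le> snd z \<and> snd z < g (fst z)} = {(x,t). 0 \<le> t \<and> t < g x}"
    by (auto simp: space_pair_measure)
  ultimately have "{(x,t). 0 \<le> t \<and> t < g x} \<in> sets (borel \<Otimes>\<^sub>M borel)" by simp
  then have S: "{(x,t). 0 \<le> t \<and> t < g x} \<in> sets (\<nu> \<Otimes>\<^sub>M lborel)"
    using nu(2) by (simp add: sets_pair_measure_cong[of \<nu> borel lborel borel])
  show ?thesis
    by (rule P.Fubini'[symmetric]) (simp add: borel_measurable_indicator[OF S])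
qed

lemma layer_cake_prob:
  fixes g :: "real \<Rightarrow> real"
  assumes nu: "prob_space \<nu>" "sets \<nu> = sets borel"
    and g[measurable]: "g \<in> borel_measurable borel" and g0: "\<And>x. 0 \<le> g x"
  shows "(\<integral>\<^sup>+x. ennreal (g x) \<partial>\<nu>) = (\<integral>\<^sup>+t. emeasure \<nu> {x. t < g x} * indicator {0..} t \<partial>lborel)"
proof -
  have "(\<integral>\<^sup>+x. ennreal (g x) \<partial>\<nu>) = (\<integral>\<^sup>+x. \<integral>\<^sup>+t. indicator {(x,t). 0 \<le> t \<and> t < g x} (x,t) \<partial>lborel \<partial>\<nu>)"
    by (rule nn_integral_cong) (simp add: A1[OF g0])
  also have "\<dots> = (\<integral>\<^sup>+t. \<integral>\<^sup>+x. indicator {(x,t). 0 \<le> t \<and> t < g x} (x,t) \<partial>\<nu> \<partial>lborel)"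
    by (rule A3[OF nu g])
  also have "\<dots> = (\<integral>\<^sup>+t. emeasure \<nu> {x. t < g x} * indicator {0..} t \<partial>lborel)"
    by (rule nn_integral_cong) (simp add: A2[OF nu g])
  finally show ?thesis .
qed



lemma integral_tv_bound:
  fixes g :: "real \<Rightarrow> real"
  assumes mu: "prob_space \<mu>" "sets \<mu> = sets borel"
    and mu': "prob_space \<mu>'" "sets \<mu>' = sets borel"
    and g[measurable]: "g \<in> borel_measurable borel" and g0: "\<And>x. 0 \<le> g x" and gc: "\<And>x. g x \<le> c"
    and T: "0 \<le> T" "\<And>A. A \<in> sets borel \<Longrightarrow> measure \<mu> A \<le> measure \<mu>' A + T"
  shows "(\<integral>\<^sup>+x. ennreal (g x) \<partial>\<mu>) \<le> (\<integral>\<^sup>+x. ennreal (g x) \<partial>\<mu>') + ennreal (c * T)"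
proof -
  interpret M: prob_space \<mu> by fact
  interpret M': prob_space \<mu>' by fact
  have "(\<lambda>t. - measure \<mu>' {x. t < g x}) \<in> borel_measurable borel"
  proof (rule borel_measurable_mono, rule monoI)
    fix a b :: real assume "a \<le> b"
    have "{x. a < g x} \<in> sets borel" by measurable
    then have "{x. a < g x} \<in> sets \<mu>'" using mu'(2) by simp
    then show "- measure \<mu>' {x. a < g x} \<le> - measure \<mu>' {x. b < g x}"
    proof -
      have "{x. b < g x} \<subseteq> {x. a < g x}" using \<open>a \<le> b\<close> by auto
      from M'.finite_measure_mono[OF this \<open>{x. a < g x} \<in> sets \<mu>'\<close>] show ?thesis by linarith
    qed
  qed
  then have "(\<lambda>t. - (- measure \<mu>' {x. t < g x})) \<in> borel_measurable borel" by (rule borel_measurable_uminus)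
  then have emm[measurable]: "(\<lambda>t. emeasure \<mu>' {x. t < g x}) \<in> borel_measurable borel"
    by (simp add: M'.emeasure_eq_measure)
  have c0: "0 \<le> c" using g0[of 0] gc[of 0] by linarith
  have "(\<integral>\<^sup>+x. ennreal (g x) \<partial>\<mu>) = (\<integral>\<^sup>+t. emeasure \<mu> {x. t < g x} * indicator {0..} t \<partial>lborel)"
    by (rule layer_cake_prob[OF mu g g0])
  also have "\<dots> \<le> (\<integral>\<^sup>+t. emeasure \<mu>' {x. t < g x} * indicator {0..} t + ennreal T * indicator {0..<c} t \<partial>lborel)"
  proof (rule nn_integral_mono)
    fix t
    have S: "{x. t < g x} \<in> sets borel" by measurable
    show "emeasure \<mu> {x. t < g x} * indicator {0..} t \<le> emeasure \<mu>' {x. t < g x} * indicator {0..} t + ennreal T * indicator {0..<c} t"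
    proof (cases "0 \<le> t")
      case True
      show ?thesis
      proof (cases "t < c")
        case True
        have "emeasure \<mu> {x. t < g x} = ennreal (measure \<mu> {x. t < g x})"
          by (simp add: M.emeasure_eq_measure)
        also have "\<dots> \<le> ennreal (measure \<mu>' {x. t < g x} + T)"
          using T(2)[OF S] by (simp add: ennreal_leI)
        also have "\<dots> = emeasure \<mu>' {x. t < g x} + ennreal T"
          using T(1) by (simp add: M'.emeasure_eq_measure ennreal_plus)
        finally show ?thesis using True \<open>0 \<le> t\<close> by simp
      next
        case False
        then have "{x. t < g x} = {}" using gc by (auto simp: not_less intro: order_trans)
        then show ?thesis by simp
      qed
    qed simp
  qed
  also have "\<dots> = (\<integral>\<^sup>+t. emeasure \<mu>' {x. t < g x} * indicator {0..} t \<partial>lborel) + (\<integral>\<^sup>+t. ennreal T * indicator {0..<c} t \<partial>lborel)"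
    by (rule nn_integral_add) (auto simp: emm)
  also have "(\<integral>\<^sup>+t. ennreal T * indicator {0..<c} t \<partial>lborel) = ennreal (c * T)"
    using c0 T(1) by (simp add: nn_integral_cmult_indicator ennreal_mult' mult.commute)
  also have "(\<integral>\<^sup>+t. emeasure \<mu>' {x. t < g x} * indicator {0..} t \<partial>lborel) = (\<integral>\<^sup>+x. ennreal (g x) \<partial>\<mu>')"
    by (rule layer_cake_prob[OF mu' g g0, symmetric])
  finally show ?thesis .
qed




lemma nn_integral_pos_everywhere:
  fixes f :: "real \<Rightarrow> real"
  assumes [measurable]: "f \<in> borel_measurable borel" and pos: "\<And>x. 0 < f x"
  shows "0 < (\<integral>\<^sup>+x. ennreal (f x) \<partial>lborel)"
proof (rule ccontr)
  assume "\<not> 0 < (\<integral>\<^sup>+x. ennreal (f x) \<partial>lborel)"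
  then have "(\<integral>\<^sup>+x. ennreal (f x) \<partial>lborel) = 0" by (simp add: not_gr_zero)
  then have "AE x in lborel. ennreal (f x) = 0" by (subst (asm) nn_integral_0_iff_AE) auto
  then obtain N where N: "{x\<in>space lborel. \<not> ennreal (f x) = 0} \<subseteq> N" "emeasure lborel N = 0" "N \<in> sets lborel"
    by (rule AE_E)
  have "UNIV \<subseteq> N" using N(1) pos by (auto simp: less_le)
  then have "N = UNIV" by auto
  then show False using N(2) by simp
qed

locale gsetup =
  fixes p :: "real \<Rightarrow> real \<Rightarrow> real" and B :: real
  assumes pm: "(\<lambda>z. p (fst z) (snd z)) \<in> borel_measurable borel"
    and pos: "\<And>u t. 0 < p u t"
    and mB: "\<And>t. (\<integral>\<^sup>+u. ennreal (p u t) \<partial>lborel) \<le> ennreal B"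
    and nB: "\<And>u. (\<integral>\<^sup>+t. ennreal (p u t) \<partial>lborel) \<le> ennreal B"
    and Zfin: "(\<integral>\<^sup>+u. \<integral>\<^sup>+t. ennreal (p u t) \<partial>lborel \<partial>lborel) < \<infinity>"
begin

lemma pm1[measurable]: "(\<lambda>(u,t). p u t) \<in> borel_measurable (lborel \<Otimes>\<^sub>M lborel)"
proof -
  have "(\<lambda>z. p (fst z) (snd z)) \<in> borel_measurable (lborel \<Otimes>\<^sub>M lborel)"
    unfolding lborel_prod using pm by (simp add: measurable_lborel1)
  then show ?thesis by (simp add: case_prod_beta)
qed

lemma pm2[measurable]: "(\<lambda>(t,u). p u t) \<in> borel_measurable (lborel \<Otimes>\<^sub>M lborel)"
proof -
  have "(\<lambda>z. p (snd z) (fst z)) \<in> borel_measurable (lborel \<Otimes>\<^sub>M lborel)"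
  proof -
    have sw: "(\<lambda>z::real\<times>real. (snd z, fst z)) \<in> borel_measurable borel"
      by (intro borel_measurable_continuous_onI continuous_intros)
    show ?thesis unfolding lborel_prod using measurable_compose[OF sw pm]
      by (simp add: measurable_lborel1 comp_def)
  qed
  then show ?thesis by (simp add: case_prod_beta)
qed

lemma pu[measurable]: "(\<lambda>u. p u t) \<in> borel_measurable borel"
proof -
  have sw: "(\<lambda>u::real. (u, t)) \<in> borel_measurable borel"
    by (intro borel_measurable_continuous_onI continuous_intros)
  show ?thesis using measurable_compose[OF sw pm] by (simp add: comp_def)
qed

end


context gsetup begin

definition "m t = (\<integral>\<^sup>+u. ennreal (p u t) \<partial>lborel)"
definition "n u = (\<integral>\<^sup>+t. ennreal (p u t) \<partial>lborel)"
definition "Z = (\<integral>\<^sup>+t. m t \<partial>lborel)"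

lemma pt[measurable]: "(\<lambda>t. p u t) \<in> borel_measurable borel"
proof -
  have sw: "(\<lambda>t::real. (u, t)) \<in> borel_measurable borel"
    by (intro borel_measurable_continuous_onI continuous_intros)
  show ?thesis using measurable_compose[OF sw pm] by (simp add: comp_def)
qed

lemma m_meas[measurable]: "m \<in> borel_measurable borel"
proof -
  have "(\<lambda>t. \<integral>\<^sup>+u. ennreal (p u t) \<partial>lborel) \<in> borel_measurable lborel" by measurable
  then show ?thesis unfolding m_def[abs_def] by (simp add: measurable_lborel1)
qed

lemma n_meas[measurable]: "n \<in> borel_measurable borel"
proof -
  have "(\<lambda>u. \<integral>\<^sup>+t. ennreal (p u t) \<partial>lborel) \<in> borel_measurable lborel" by measurable
  then show ?thesis unfolding n_def[abs_def] by (simp add: measurable_lborel1)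
qed

lemma m_pos: "0 < m t" unfolding m_def by (rule nn_integral_pos_everywhere[OF pu pos])
lemma n_pos: "0 < n u" unfolding n_def by (rule nn_integral_pos_everywhere[OF pt pos])
lemma m_fin: "m t < \<infinity>" unfolding m_def using mB[of t] by (simp add: le_less_trans)
lemma n_fin: "n u < \<infinity>" unfolding n_def using nB[of u] by (simp add: le_less_trans)
lemma m_le: "m t \<le> ennreal B" unfolding m_def by (rule mB)
lemma n_le: "n u \<le> ennreal B" unfolding n_def by (rule nB)

lemma Z_eq: "Z = (\<integral>\<^sup>+u. n u \<partial>lborel)"
  unfolding Z_def m_def n_def
  by (rule lborel_pair.Fubini') measurable

lemma Z_fin: "Z < \<infinity>" using Zfin unfolding Z_eq n_def .
lemma Z_pos: "0 < Z"
proof -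
  have "0 < (\<integral>\<^sup>+t. ennreal (enn2real (m t)) \<partial>lborel)"
    by (rule nn_integral_pos_everywhere) (use m_pos m_fin in \<open>auto simp: enn2real_positive_iff\<close>)
  also have "(\<integral>\<^sup>+t. ennreal (enn2real (m t)) \<partial>lborel) = Z"
    unfolding Z_def by (rule nn_integral_cong) (use m_fin in \<open>simp add: ennreal_enn2real_if less_top\<close>)
  finally show ?thesis .
qed

end



lemma prob_density_div:
  fixes f :: "real \<Rightarrow> ennreal"
  assumes f[measurable]: "f \<in> borel_measurable borel" and c: "(\<integral>\<^sup>+x. f x \<partial>lborel) = c" "c \<noteq> 0" "c < \<infinity>"
  shows "prob_space (density lborel (\<lambda>x. f x / c))"
proof
  have fl[measurable]: "f \<in> borel_measurable lborel" by (simp add: measurable_lborel1)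
  have "emeasure (density lborel (\<lambda>x. f x / c)) (space (density lborel (\<lambda>x. f x / c))) = (\<integral>\<^sup>+x. f x / c \<partial>lborel)"
    by (subst emeasure_density) auto
  also have "\<dots> = (\<integral>\<^sup>+x. f x \<partial>lborel) / c" by (rule nn_integral_divide) simp
  also have "\<dots> = 1" using c by simp
  finally show "emeasure (density lborel (\<lambda>x. f x / c)) (space (density lborel (\<lambda>x. f x / c))) = 1" .
qed

lemma kernel_meas:
  fixes q :: "real \<Rightarrow> real \<Rightarrow> ennreal"
  assumes q[measurable]: "(\<lambda>(a,x). q a x) \<in> borel_measurable (lborel \<Otimes>\<^sub>M lborel)"
    and prob: "\<And>a. prob_space (density lborel (q a))"
  shows "(\<lambda>a. density lborel (q a)) \<in> borel \<rightarrow>\<^sub>M prob_algebra borel"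
proof (rule measurable_prob_algebra_generated[where \<Omega>=UNIV and G="sets borel"])
  show "sets borel = sigma_sets UNIV (sets borel)"
    by (metis sets.sigma_sets_eq space_borel)
  show "Int_stable (sets (borel::real measure))" by (auto simp: Int_stable_def)
  show "sets borel \<subseteq> Pow UNIV" by simp
  show "\<And>a. a \<in> space borel \<Longrightarrow> prob_space (density lborel (q a))" by (rule prob)
  show "\<And>a. a \<in> space borel \<Longrightarrow> sets (density lborel (q a)) = sets borel" by simp
  fix A :: "real set" assume A: "A \<in> sets borel"
  have qa: "\<And>a. q a \<in> borel_measurable lborel"
    using measurable_Pair2[OF q] by simp
  have Al[measurable]: "A \<in> sets lborel" using A by simp
  have "(\<lambda>a. \<integral>\<^sup>+x. q a x * indicator A x \<partial>lborel) \<in> borel_measurable lborel" by measurable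
  then have "(\<lambda>a. \<integral>\<^sup>+x. q a x * indicator A x \<partial>lborel) \<in> borel_measurable borel" by (simp add: measurable_lborel1)
  then show "(\<lambda>a. emeasure (density lborel (q a)) A) \<in> borel_measurable borel"
    by (subst measurable_cong[where g="\<lambda>a. \<integral>\<^sup>+x. q a x * indicator A x \<partial>lborel"])
       (auto simp: emeasure_density[OF qa Al])
qed

context gsetup begin

lemma m_meas'[measurable]: "m \<in> borel_measurable lborel" by (simp add: measurable_lborel1)
lemma n_meas'[measurable]: "n \<in> borel_measurable lborel" by (simp add: measurable_lborel1)

lemma cU_eq: "cond_U p t = density lborel (\<lambda>u. ennreal (p u t) / m t)"
  unfolding cond_U_def m_def ..
lemma cT_eq: "cond_Theta p u = density lborel (\<lambda>t. ennreal (p u t) / n u)"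
  unfolding cond_Theta_def n_def ..
lemma marg_eq: "marg_Theta p = density lborel (\<lambda>t. m t / Z)"
  unfolding marg_Theta_def Z_def m_def ..

lemma cU_prob: "prob_space (cond_U p t)"
  unfolding cU_eq by (rule prob_density_div) (use m_pos[of t] m_fin[of t] in \<open>auto simp: m_def\<close>)
lemma cT_prob: "prob_space (cond_Theta p u)"
  unfolding cT_eq by (rule prob_density_div) (use n_pos[of u] n_fin[of u] in \<open>auto simp: n_def\<close>)
lemma marg_prob: "prob_space (marg_Theta p)"
  unfolding marg_eq by (rule prob_density_div) (use Z_pos Z_fin in \<open>auto simp: Z_def\<close>)

lemma cU_meas[measurable]: "cond_U p \<in> borel \<rightarrow>\<^sub>M prob_algebra borel"
proof -
  have "(\<lambda>t. density lborel (\<lambda>u. ennreal (p u t) / m t)) \<in> borel \<rightarrow>\<^sub>M prob_algebra borel"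
    by (rule kernel_meas) (measurable, use cU_prob in \<open>simp add: cU_eq\<close>)
  then show ?thesis unfolding cU_eq[abs_def] .
qed

lemma cT_meas[measurable]: "cond_Theta p \<in> borel \<rightarrow>\<^sub>M prob_algebra borel"
proof -
  have "(\<lambda>u. density lborel (\<lambda>t. ennreal (p u t) / n u)) \<in> borel \<rightarrow>\<^sub>M prob_algebra borel"
    by (rule kernel_meas) (measurable, use cT_prob in \<open>simp add: cT_eq\<close>)
  then show ?thesis unfolding cT_eq[abs_def] .
qed

lemma K_meas[measurable]: "gibbs_step p \<in> borel \<rightarrow>\<^sub>M prob_algebra borel"
  unfolding gibbs_step_def[abs_def] by (rule measurable_bind_prob_space[OF cU_meas cT_meas])

lemma marg_space: "marg_Theta p \<in> space (prob_algebra borel)"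
  using marg_prob by (simp add: space_prob_algebra marg_eq)

lemma gd_space: "gibbs_dist p t0 k \<in> space (prob_algebra borel)"
proof (induction k)
  case 0 then show ?case by (simp add: space_prob_algebra prob_space_return)
next
  case (Suc k)
  then show ?case
    using measurable_space[OF measurable_bind_prob_space[OF measurable_const[OF Suc] K_meas], of undefined "count_space UNIV"]
    by (simp add: space_prob_algebra)
qed

end



lemma ediv_cancel:
  fixes a b e Z :: ennreal
  assumes "0 < a" "a < \<infinity>"
  shows "(a / Z) * (b / a * e) = b / Z * e"
proof -
  have 1: "a * inverse a = 1" using ennreal_divide_self[of a] assms by (simp add: divide_ennreal_def)
  have "(a / Z) * (b / a * e) = (a * inverse a) * (b * inverse Z * e)"
    by (simp add: divide_ennreal_def ac_simps)
  also have "\<dots> = b / Z * e" using 1 by (simp add: divide_ennreal_def)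
  finally show ?thesis .
qed

lemma kernel_emeas:
  assumes "K \<in> M \<rightarrow>\<^sub>M prob_algebra N" "A \<in> sets N"
  shows "(\<lambda>a. emeasure (K a) A) \<in> borel_measurable M"
  by (rule measurable_compose[OF measurable_prob_algebraD[OF assms(1)] measurable_emeasure_subprob_algebra[OF assms(2)]])

context gsetup begin

lemma cU_space: "cond_U p t \<in> space (prob_algebra borel)"
  using cU_prob by (simp add: space_prob_algebra cU_eq)

definition "E A u = emeasure (cond_Theta p u) A"

lemma E_meas[measurable]: "A \<in> sets borel \<Longrightarrow> E A \<in> borel_measurable borel"
  unfolding E_def[abs_def]
  by (rule kernel_emeas[OF cT_meas])

lemma E_meas': "A \<in> sets borel \<Longrightarrow> E A \<in> borel_measurable lborel"
  using E_meas by (simp add: measurable_lborel1)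

lemma E_eq: "A \<in> sets borel \<Longrightarrow> E A u = (\<integral>\<^sup>+s. ennreal (p u s) / n u * indicator A s \<partial>lborel)"
  unfolding E_def cT_eq by (subst emeasure_density) (auto simp: measurable_lborel1)

lemma K_emeasure: "A \<in> sets borel \<Longrightarrow>
   emeasure (gibbs_step p t) A = (\<integral>\<^sup>+u. ennreal (p u t) / m t * E A u \<partial>lborel)"
  unfolding gibbs_step_def
  apply (subst emeasure_bind_prob_algebra[OF cU_space cT_meas], assumption)
  apply (subst cU_eq)
  apply (subst nn_integral_density)
  apply (auto simp: E_def[symmetric] E_meas' measurable_lborel1)
  done

lemma stationary: "bind (marg_Theta p) (gibbs_step p) = marg_Theta p"
proof (rule measure_eqI)
  show "sets (bind (marg_Theta p) (gibbs_step p)) = sets (marg_Theta p)"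
    using sets_bind'[OF marg_space K_meas] by (simp add: marg_eq)
  fix A assume "A \<in> sets (bind (marg_Theta p) (gibbs_step p))"
  then have A[measurable]: "A \<in> sets borel" using sets_bind'[OF marg_space K_meas] by simp
  have Al[measurable]: "A \<in> sets lborel" by simp
  note E_meas'[OF A, measurable]
  have "emeasure (bind (marg_Theta p) (gibbs_step p)) A = (\<integral>\<^sup>+t. emeasure (gibbs_step p t) A \<partial>marg_Theta p)"
    by (rule emeasure_bind_prob_algebra[OF marg_space K_meas A])
  also have "\<dots> = (\<integral>\<^sup>+t. m t / Z * emeasure (gibbs_step p t) A \<partial>lborel)"
    unfolding marg_eq
    by (rule nn_integral_density)
       (auto intro: kernel_emeas[OF K_meas] simp: measurable_lborel1)
  also have "\<dots> = (\<integral>\<^sup>+t. \<integral>\<^sup>+u. m t / Z * (ennreal (p u t) / m t * E A u) \<partial>lborel \<partial>lborel)"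
    by (rule nn_integral_cong) (simp add: K_emeasure[OF A] nn_integral_cmult)
  also have "\<dots> = (\<integral>\<^sup>+t. \<integral>\<^sup>+u. ennreal (p u t) / Z * E A u \<partial>lborel \<partial>lborel)"
    by (intro nn_integral_cong ediv_cancel m_pos m_fin)
  also have "\<dots> = (\<integral>\<^sup>+u. \<integral>\<^sup>+t. ennreal (p u t) / Z * E A u \<partial>lborel \<partial>lborel)"
    by (rule lborel_pair.Fubini') measurable
  also have "\<dots> = (\<integral>\<^sup>+u. n u / Z * E A u \<partial>lborel)"
  proof (rule nn_integral_cong)
    fix u
    have "(\<integral>\<^sup>+t. ennreal (p u t) / Z * E A u \<partial>lborel) = (\<integral>\<^sup>+t. ennreal (p u t) * (E A u / Z) \<partial>lborel)"
      by (simp add: divide_ennreal_def ac_simps)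
    also have "\<dots> = n u * (E A u / Z)" unfolding n_def by (rule nn_integral_multc) simp
    also have "\<dots> = n u / Z * E A u" by (simp add: divide_ennreal_def ac_simps)
    finally show "(\<integral>\<^sup>+t. ennreal (p u t) / Z * E A u \<partial>lborel) = n u / Z * E A u" .
  qed
  also have "\<dots> = (\<integral>\<^sup>+u. \<integral>\<^sup>+s. n u / Z * (ennreal (p u s) / n u * indicator A s) \<partial>lborel \<partial>lborel)"
    by (rule nn_integral_cong) (simp add: E_eq[OF A] nn_integral_cmult)
  also have "\<dots> = (\<integral>\<^sup>+u. \<integral>\<^sup>+s. ennreal (p u s) / Z * indicator A s \<partial>lborel \<partial>lborel)"
    by (intro nn_integral_cong ediv_cancel n_pos n_fin)
  also have "\<dots> = (\<integral>\<^sup>+s. \<integral>\<^sup>+u. ennreal (p u s) / Z * indicator A s \<partial>lborel \<partial>lborel)"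
    by (rule lborel_pair.Fubini'[symmetric]) measurable
  also have "\<dots> = (\<integral>\<^sup>+s. m s / Z * indicator A s \<partial>lborel)"
  proof (rule nn_integral_cong)
    fix s
    have "(\<integral>\<^sup>+u. ennreal (p u s) / Z * indicator A s \<partial>lborel) = (\<integral>\<^sup>+u. ennreal (p u s) * (indicator A s / Z) \<partial>lborel)"
      by (simp add: divide_ennreal_def ac_simps)
    also have "\<dots> = m s * (indicator A s / Z)" unfolding m_def by (rule nn_integral_multc) simp
    also have "\<dots> = m s / Z * indicator A s" by (simp add: divide_ennreal_def ac_simps)
    finally show "(\<integral>\<^sup>+u. ennreal (p u s) / Z * indicator A s \<partial>lborel) = m s / Z * indicator A s" .
  qed
  also have "\<dots> = emeasure (marg_Theta p) A"
    unfolding marg_eq by (rule emeasure_density[symmetric]) auto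
  finally show "emeasure (bind (marg_Theta p) (gibbs_step p)) A = emeasure (marg_Theta p) A" .
qed

end



context gsetup begin

lemma K_prob: "prob_space (gibbs_step p t)"
  using measurable_space[OF K_meas, of t] by (simp add: space_prob_algebra)
lemma K_sets: "sets (gibbs_step p t) = sets borel"
  using measurable_space[OF K_meas, of t] by (simp add: space_prob_algebra)

lemma contract:
  assumes eps: "0 < \<epsilon>" "\<epsilon> \<le> 1"
    and doeb: "\<And>t A. A \<in> sets borel \<Longrightarrow> \<epsilon> * (measure lborel (A \<inter> {-1..1}) / 2) \<le> measure (gibbs_step p t) A"
    and mu: "\<mu> \<in> space (prob_algebra borel)" and mu': "\<mu>' \<in> space (prob_algebra borel)"
    and T: "0 \<le> T" "\<And>A. A \<in> sets borel \<Longrightarrow> measure \<mu> A \<le> measure \<mu>' A + T"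
    and A: "A \<in> sets borel"
  shows "measure (bind \<mu> (gibbs_step p)) A \<le> measure (bind \<mu>' (gibbs_step p)) A + (1 - \<epsilon>) * T"
proof -
  define \<nu> where "\<nu> = measure lborel (A \<inter> {-1..1}) / 2"
  define \<nu>' where "\<nu>' = measure lborel ((UNIV - A) \<inter> {-1..1}) / 2"
  have Ac: "UNIV - A \<in> sets borel" using A by auto
  have "measure lborel (A \<inter> {-1..1}) + measure lborel ((UNIV - A) \<inter> {-1..1}) = measure lborel {-1..(1::real)}"
  proof -
    have "measure lborel ((A \<inter> {-1..1}) \<union> ((UNIV - A) \<inter> {-1..1})) = measure lborel (A \<inter> {-1..1}) + measure lborel ((UNIV - A) \<inter> {-1..1})"
    proof (rule measure_Union)
      have "emeasure lborel (A \<inter> {-1..1}) \<le> emeasure lborel {-1..(1::real)}" by (rule emeasure_mono) auto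
      then show "emeasure lborel (A \<inter> {-1..1}) \<noteq> \<infinity>" by (auto simp: top_unique)
      have "emeasure lborel ((UNIV - A) \<inter> {-1..1}) \<le> emeasure lborel {-1..(1::real)}" by (rule emeasure_mono) auto
      then show "emeasure lborel ((UNIV - A) \<inter> {-1..1}) \<noteq> \<infinity>" by (auto simp: top_unique)
    qed (use A in auto)
    moreover have "(A \<inter> {-1..1}) \<union> ((UNIV - A) \<inter> {-1..1}) = {-1..(1::real)}" by auto
    ultimately show ?thesis by simp
  qed
  then have nu_sum: "\<nu> + \<nu>' = 1" unfolding \<nu>_def \<nu>'_def by simp
  have nu0: "0 \<le> \<nu>" "0 \<le> \<nu>'" unfolding \<nu>_def \<nu>'_def by auto
  define h where "h t = measure (gibbs_step p t) A - \<epsilon> * \<nu>" for t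
  have hm[measurable]: "h \<in> borel_measurable borel"
    unfolding h_def[abs_def]
    using measurable_compose[OF K_meas measurable_measure_prob_algebra[OF A]] by measurable
  have h0: "0 \<le> h t" for t
  proof -
    have "\<epsilon> * \<nu> \<le> measure (gibbs_step p t) A" using doeb[OF A, of t] unfolding \<nu>_def .
    then show ?thesis unfolding h_def by linarith
  qed
  have h1: "h t \<le> 1 - \<epsilon>" for t
  proof -
    interpret prob_space "gibbs_step p t" by (rule K_prob)
    have sp: "space (gibbs_step p t) = UNIV" using sets_eq_imp_space_eq[OF K_sets[of t]] by simp
    have Ae: "A \<in> events" using A K_sets[of t] by simp
    have "prob (UNIV - A) = 1 - prob A" using prob_compl[OF Ae] sp by simp
    then have c1: "measure (gibbs_step p t) A = 1 - measure (gibbs_step p t) (UNIV - A)" by linarith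
    have c2: "\<epsilon> * \<nu>' \<le> measure (gibbs_step p t) (UNIV - A)"
      using doeb[OF Ac, of t] unfolding \<nu>'_def .
    have "\<epsilon> * \<nu> + \<epsilon> * \<nu>' = \<epsilon>" using nu_sum by (metis distrib_left mult_1_right)
    then show ?thesis unfolding h_def using c1 c2 by linarith
  qed
  have eq: "emeasure (bind M (gibbs_step p)) A = (\<integral>\<^sup>+t. ennreal (h t) \<partial>M) + ennreal (\<epsilon> * \<nu>)"
    if M: "M \<in> space (prob_algebra borel)" for M
  proof -
    interpret prob_space M using M by (simp add: space_prob_algebra)
    have Ms: "sets M = sets borel" using M by (simp add: space_prob_algebra)
    have "emeasure (bind M (gibbs_step p)) A = (\<integral>\<^sup>+t. emeasure (gibbs_step p t) A \<partial>M)"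
      by (rule emeasure_bind_prob_algebra[OF M K_meas A])
    also have "\<dots> = (\<integral>\<^sup>+t. ennreal (h t) + ennreal (\<epsilon> * \<nu>) \<partial>M)"
    proof (rule nn_integral_cong)
      fix t
      interpret K: prob_space "gibbs_step p t" by (rule K_prob)
      show "emeasure (gibbs_step p t) A = ennreal (h t) + ennreal (\<epsilon> * \<nu>)"
        using h0[of t] eps nu0 by (simp add: K.emeasure_eq_measure h_def ennreal_plus[symmetric])
    qed
    also have "\<dots> = (\<integral>\<^sup>+t. ennreal (h t) \<partial>M) + (\<integral>\<^sup>+t. ennreal (\<epsilon> * \<nu>) \<partial>M)"
      by (rule nn_integral_add) (auto simp: Ms measurable_cong_sets[OF Ms refl])
    also have "(\<integral>\<^sup>+t. ennreal (\<epsilon> * \<nu>) \<partial>M) = ennreal (\<epsilon> * \<nu>)"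
      by (simp add: emeasure_space_1)
    finally show ?thesis .
  qed
  have mus: "prob_space \<mu>" "sets \<mu> = sets borel" "prob_space \<mu>'" "sets \<mu>' = sets borel"
    using mu mu' by (auto simp: space_prob_algebra)
  have "(\<integral>\<^sup>+t. ennreal (h t) \<partial>\<mu>) \<le> (\<integral>\<^sup>+t. ennreal (h t) \<partial>\<mu>') + ennreal ((1 - \<epsilon>) * T)"
    by (rule integral_tv_bound[OF mus hm h0 h1 T])
  then have le: "emeasure (bind \<mu> (gibbs_step p)) A \<le> emeasure (bind \<mu>' (gibbs_step p)) A + ennreal ((1 - \<epsilon>) * T)"
    unfolding eq[OF mu] eq[OF mu'] by (metis add.commute add.left_commute add_right_mono)
  interpret B1: prob_space "bind \<mu> (gibbs_step p)" by (rule prob_space_bind'[OF mu K_meas])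
  interpret B2: prob_space "bind \<mu>' (gibbs_step p)" by (rule prob_space_bind'[OF mu' K_meas])
  show ?thesis
    using le eps T(1) by (simp add: B1.emeasure_eq_measure B2.emeasure_eq_measure ennreal_plus[symmetric] del: ennreal_plus)
qed

end



context gsetup begin

lemma ue_of_doeblin:
  assumes eps: "0 < \<epsilon>" "\<epsilon> \<le> 1"
    and doeb: "\<And>t A. A \<in> sets borel \<Longrightarrow> \<epsilon> * (measure lborel (A \<inter> {-1..1}) / 2) \<le> measure (gibbs_step p t) A"
  shows "uniformly_ergodic p"
proof -
  let ?\<pi> = "marg_Theta p"
  have bnd: "A \<in> sets borel \<Longrightarrow> \<bar>measure (gibbs_dist p t0 k) A - measure ?\<pi> A\<bar> \<le> (1 - \<epsilon>) ^ k" for t0 k A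
  proof (induction k arbitrary: A)
    case 0
    interpret P1: prob_space "gibbs_dist p t0 0" using gd_space[of t0 0] by (simp add: space_prob_algebra)
    interpret P2: prob_space ?\<pi> using marg_space by (simp add: space_prob_algebra)
    have "measure (gibbs_dist p t0 0) A \<le> 1" "measure ?\<pi> A \<le> 1" by (rule P1.prob_le_1, rule P2.prob_le_1)
    moreover have "0 \<le> measure (gibbs_dist p t0 0) A" "0 \<le> measure ?\<pi> A" by auto
    ultimately have "\<bar>measure (gibbs_dist p t0 0) A - measure ?\<pi> A\<bar> \<le> 1" by (simp only: abs_le_iff) linarith
    then show ?case by (simp only: power_0)
  next
    case (Suc k)
    have T0: "0 \<le> (1 - \<epsilon>) ^ k" using eps by simp
    have T1: "\<And>A. A \<in> sets borel \<Longrightarrow> measure (gibbs_dist p t0 k) A \<le> measure ?\<pi> A + (1 - \<epsilon>) ^ k"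
    proof -
      fix A :: "real set" assume "A \<in> sets borel"
      from Suc.IH[OF this] show "measure (gibbs_dist p t0 k) A \<le> measure ?\<pi> A + (1 - \<epsilon>) ^ k" by (simp only: abs_le_iff) linarith
    qed
    have T2: "\<And>A. A \<in> sets borel \<Longrightarrow> measure ?\<pi> A \<le> measure (gibbs_dist p t0 k) A + (1 - \<epsilon>) ^ k"
    proof -
      fix A :: "real set" assume "A \<in> sets borel"
      from Suc.IH[OF this] show "measure ?\<pi> A \<le> measure (gibbs_dist p t0 k) A + (1 - \<epsilon>) ^ k" by (simp only: abs_le_iff) linarith
    qed
    have a: "measure (bind (gibbs_dist p t0 k) (gibbs_step p)) A \<le> measure (bind ?\<pi> (gibbs_step p)) A + (1 - \<epsilon>) * (1 - \<epsilon>) ^ k"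
      by (rule contract[OF eps doeb gd_space marg_space T0 T1 Suc.prems])
    have b: "measure (bind ?\<pi> (gibbs_step p)) A \<le> measure (bind (gibbs_dist p t0 k) (gibbs_step p)) A + (1 - \<epsilon>) * (1 - \<epsilon>) ^ k"
      by (rule contract[OF eps doeb marg_space gd_space T0 T2 Suc.prems])
    show ?case using a b unfolding stationary by (simp add: abs_le_iff)
  qed
  have tv: "tv_dist (gibbs_dist p t0 k) ?\<pi> \<le> 1 * (1 - \<epsilon>) ^ k" for t0 k
    unfolding tv_dist_def by (simp, rule cSUP_least) (auto intro: bnd)
  show ?thesis unfolding uniformly_ergodic_def
    by (rule exI[of _ "1 - \<epsilon>"], rule exI[of _ "\<lambda>_. 1"]) (use eps tv in auto)
qed

end



lemma ediv_ge:
  assumes "0 \<le> x" "0 < m" "m \<le> ennreal B"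
  shows "ennreal (x / B) \<le> ennreal x / m"
proof -
  have mf: "m < \<infinity>" using assms(3) by (simp add: le_less_trans)
  define mr where "mr = enn2real m"
  have "0 < ennreal B" using assms(2,3) by (rule less_le_trans)
  then have Bp: "0 < B" by simp
  have m: "m = ennreal mr" "0 < mr" using assms mf
    by (auto simp: mr_def enn2real_positive_iff less_top[symmetric])
  have "mr \<le> enn2real (ennreal B)" unfolding mr_def by (rule enn2real_mono[OF assms(3)]) simp
  then have "mr \<le> B" using Bp by simp
  note m = m this
  have "ennreal x / m = ennreal (x / mr)" using m assms(1) by (simp add: divide_ennreal)
  moreover have "x / B \<le> x / mr" using m assms(1) by (simp add: divide_left_mono)
  ultimately show ?thesis by (simp add: ennreal_leI)
qed

lemma min_pos_compact:
  fixes f :: "real \<times> real \<Rightarrow> real"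
  assumes "continuous_on UNIV f" "\<And>z. 0 < f z"
  shows "\<exists>c>0. \<forall>u t. \<bar>u\<bar> \<le> a \<and> \<bar>t\<bar> \<le> b \<longrightarrow> c \<le> f (u, t)"
proof (cases "0 \<le> a \<and> 0 \<le> b")
  case True
  have "compact ({-a..a} \<times> {-b..b})" by (intro compact_Times compact_Icc)
  moreover have "{-a..a} \<times> {-b..b} \<noteq> {}" using True by auto
  moreover have "continuous_on ({-a..a} \<times> {-b..b}) f" using assms(1) continuous_on_subset by blast
  ultimately obtain z where z: "z \<in> {-a..a} \<times> {-b..b}" "\<forall>y \<in> {-a..a} \<times> {-b..b}. f z \<le> f y"
    using continuous_attains_inf by blast
  show ?thesis
    by (rule exI[of _ "f z"]) (use z assms(2) in \<open>auto simp: abs_le_iff\<close>)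
next
  case False
  then show ?thesis by (intro exI[of _ 1]) auto
qed

context gsetup begin

lemma B_pos: "0 < B"
proof -
  have "0 < ennreal B" using m_pos[of 0] m_le[of 0] by (rule less_le_trans)
  then show ?thesis by simp
qed

lemma doeblin:
  assumes cont: "continuous_on UNIV (\<lambda>z. p (fst z) (snd z))"
    and tight: "0 < k" "0 < \<delta>" "\<And>t. R \<le> \<bar>t\<bar> \<Longrightarrow> \<delta> \<le> measure (cond_U p t) {u. \<bar>u\<bar> \<le> k}"
  shows "\<exists>\<epsilon>. 0 < \<epsilon> \<and> \<epsilon> \<le> 1 \<and> (\<forall>t A. A \<in> sets borel \<longrightarrow> \<epsilon> * (measure lborel (A \<inter> {-1..1}) / 2) \<le> measure (gibbs_step p t) A)"
proof -
  have posz: "\<And>z. 0 < p (fst z) (snd z)" using pos by simp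
  obtain c1 where c1: "0 < c1" "\<And>u t. \<bar>u\<bar> \<le> k \<Longrightarrow> \<bar>t\<bar> \<le> 1 \<Longrightarrow> c1 \<le> p u t"
    using min_pos_compact[OF cont posz, of k 1] by auto
  obtain c2 where c2: "0 < c2" "\<And>u t. \<bar>u\<bar> \<le> k \<Longrightarrow> \<bar>t\<bar> \<le> \<bar>R\<bar> \<Longrightarrow> c2 \<le> p u t"
    using min_pos_compact[OF cont posz, of k "\<bar>R\<bar>"] by auto
  define S where "S = {u::real. \<bar>u\<bar> \<le> k}"
  have S_eq: "S = {-k..k}" unfolding S_def by (auto simp: abs_le_iff)
  have Sb[measurable]: "S \<in> sets borel" "S \<in> sets lborel" unfolding S_eq by auto
  define \<delta>0 where "\<delta>0 = min \<delta> (c2 / B * (2 * k))"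
  have d0: "0 < \<delta>0" unfolding \<delta>0_def using tight c2 B_pos by auto
  have cUS: "ennreal \<delta>0 \<le> emeasure (cond_U p t) S" for t
  proof (cases "R \<le> \<bar>t\<bar>")
    case True
    interpret prob_space "cond_U p t" by (rule cU_prob)
    have "ennreal \<delta>0 \<le> ennreal \<delta>" unfolding \<delta>0_def by (simp add: ennreal_leI)
    also have "\<dots> \<le> ennreal (measure (cond_U p t) S)" using tight(3)[OF True] unfolding S_def by (simp add: ennreal_leI)
    finally show ?thesis by (simp add: emeasure_eq_measure)
  next
    case False
    have "ennreal \<delta>0 \<le> ennreal (c2 / B * (2 * k))" unfolding \<delta>0_def by (simp add: ennreal_leI)
    also have "\<dots> = (\<integral>\<^sup>+u. ennreal (c2 / B) * indicator S u \<partial>lborel)"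
      using tight(1) c2(1) B_pos by (simp add: S_eq nn_integral_cmult_indicator ennreal_mult'[symmetric] mult.commute)
    also have "\<dots> \<le> (\<integral>\<^sup>+u. ennreal (p u t) / m t * indicator S u \<partial>lborel)"
    proof (rule nn_integral_mono)
      fix u
      show "ennreal (c2 / B) * indicator S u \<le> ennreal (p u t) / m t * indicator S u"
      proof (cases "u \<in> S")
        case True
        then have "c2 \<le> p u t" using c2(2)[of u t] False by (auto simp: S_def)
        then have "ennreal (c2 / B) \<le> ennreal (p u t / B)" using B_pos by (simp add: ennreal_leI divide_right_mono)
        also have "\<dots> \<le> ennreal (p u t) / m t" by (rule ediv_ge[OF less_imp_le[OF pos] m_pos m_le])
        finally show ?thesis using True by simp
      qed simp
    qed
    also have "\<dots> = emeasure (cond_U p t) S"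
      unfolding cU_eq by (rule emeasure_density[symmetric]) auto
    finally show ?thesis .
  qed
  define \<epsilon> where "\<epsilon> = min 1 (2 * \<delta>0 * (c1 / B))"
  have eps: "0 < \<epsilon>" "\<epsilon> \<le> 1" unfolding \<epsilon>_def using d0 c1 B_pos by auto
  have doeb: "\<epsilon> * (measure lborel (A \<inter> {-1..1}) / 2) \<le> measure (gibbs_step p t) A"
    if A[measurable]: "A \<in> sets borel" for t A
  proof -
    have Al[measurable]: "A \<in> sets lborel" using A by simp
    define A' where "A' = A \<inter> {-1..1::real}"
    have A'm[measurable]: "A' \<in> sets lborel" unfolding A'_def by simp
    have "emeasure lborel A' \<le> emeasure lborel {-1..1::real}" unfolding A'_def by (rule emeasure_mono) auto
    then have A'fin: "emeasure lborel A' = ennreal (measure lborel A')"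
      by (intro emeasure_eq_ennreal_measure) (auto simp: top_unique)
    have EA: "ennreal (c1 / B) * emeasure lborel A' \<le> E A u" if u: "\<bar>u\<bar> \<le> k" for u
    proof -
      have "ennreal (c1 / B) * emeasure lborel A' = (\<integral>\<^sup>+s. ennreal (c1 / B) * indicator A' s \<partial>lborel)"
        by (rule nn_integral_cmult_indicator[symmetric, OF A'm])
      also have "\<dots> \<le> (\<integral>\<^sup>+s. ennreal (p u s) / n u * indicator A s \<partial>lborel)"
      proof (rule nn_integral_mono)
        fix s
        show "ennreal (c1 / B) * indicator A' s \<le> ennreal (p u s) / n u * indicator A s"
        proof (cases "s \<in> A'")
          case True
          then have "c1 \<le> p u s" using c1(2)[OF u, of s] by (auto simp: A'_def)
          then have "ennreal (c1 / B) \<le> ennreal (p u s / B)" using B_pos by (simp add: ennreal_leI divide_right_mono)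
          also have "\<dots> \<le> ennreal (p u s) / n u" by (rule ediv_ge[OF less_imp_le[OF pos] n_pos n_le])
          finally show ?thesis using True by (simp add: A'_def)
        qed simp
      qed
      also have "\<dots> = E A u" by (rule E_eq[OF A, symmetric])
      finally show ?thesis .
    qed
    have "ennreal \<delta>0 * (ennreal (c1 / B) * emeasure lborel A') \<le> emeasure (cond_U p t) S * (ennreal (c1 / B) * emeasure lborel A')"
      by (rule mult_right_mono[OF cUS]) simp
    also have "\<dots> = (\<integral>\<^sup>+u. ennreal (p u t) / m t * indicator S u \<partial>lborel) * (ennreal (c1 / B) * emeasure lborel A')"
      unfolding cU_eq by (subst emeasure_density) auto
    also have "\<dots> = (\<integral>\<^sup>+u. ennreal (p u t) / m t * (indicator S u * (ennreal (c1 / B) * emeasure lborel A')) \<partial>lborel)"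
      by (subst nn_integral_multc[symmetric]) (auto simp: mult.assoc)
    also have "\<dots> \<le> (\<integral>\<^sup>+u. ennreal (p u t) / m t * E A u \<partial>lborel)"
    proof (intro nn_integral_mono mult_left_mono)
      fix u
      show "indicator S u * (ennreal (c1 / B) * emeasure lborel A') \<le> E A u"
        using EA[of u] by (cases "u \<in> S") (auto simp: S_def)
    qed simp
    also have "\<dots> = emeasure (gibbs_step p t) A" by (rule K_emeasure[OF A, symmetric])
    finally have le: "ennreal (\<delta>0 * (c1 / B) * measure lborel A') \<le> emeasure (gibbs_step p t) A"
      using d0 c1 B_pos by (simp add: A'fin ennreal_mult'[symmetric] mult.assoc)
    interpret K: prob_space "gibbs_step p t" by (rule K_prob)
    have "\<delta>0 * (c1 / B) * measure lborel A' \<le> measure (gibbs_step p t) A"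
      using le by (simp add: K.emeasure_eq_measure)
    moreover have "\<epsilon> * (measure lborel A' / 2) \<le> \<delta>0 * (c1 / B) * measure lborel A'"
    proof -
      have "\<epsilon> \<le> 2 * \<delta>0 * (c1 / B)" unfolding \<epsilon>_def by simp
      then have "\<epsilon> * measure lborel A' \<le> 2 * \<delta>0 * (c1 / B) * measure lborel A'"
        by (rule mult_right_mono) simp
      moreover have "\<epsilon> * (measure lborel A' / 2) = (\<epsilon> * measure lborel A') / 2" by simp
      moreover have "2 * \<delta>0 * (c1 / B) * measure lborel A' = 2 * (\<delta>0 * (c1 / B) * measure lborel A')" by simp
      ultimately show ?thesis by linarith
    qed
    ultimately show ?thesis unfolding A'_def by linarith
  qed
  show ?thesis using eps doeb by blast
qed

end



lemma shift_int:
  fixes f :: "real \<Rightarrow> real"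
  assumes [measurable]: "f \<in> borel_measurable borel"
  shows "(\<integral>\<^sup>+x. ennreal (f (x - t)) \<partial>lborel) = (\<integral>\<^sup>+x. ennreal (f x) \<partial>lborel)"
  using nn_integral_real_affine[of "\<lambda>x. ennreal (f x)" 1 "-t"] by simp

lemma refl_int:
  fixes f :: "real \<Rightarrow> real"
  assumes [measurable]: "f \<in> borel_measurable borel"
  shows "(\<integral>\<^sup>+x. ennreal (f (a - x)) \<partial>lborel) = (\<integral>\<^sup>+x. ennreal (f x) \<partial>lborel)"
  using nn_integral_real_affine[of "\<lambda>x. ennreal (f x)" "-1" a] by simp

context gsetup begin

lemma ue_of_limsup:
  assumes cont: "continuous_on UNIV (\<lambda>z. p (fst z) (snd z))"
    and k: "0 < k" and L: "Limsup at_infinity (\<lambda>\<theta>. ereal (measure (cond_U p \<theta>) {u. k < \<bar>u\<bar>})) < 1"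
  shows "uniformly_ergodic p"
proof -
  obtain c where c: "Limsup at_infinity (\<lambda>\<theta>. ereal (measure (cond_U p \<theta>) {u. k < \<bar>u\<bar>})) < c" "c < 1"
    using dense[OF L] by blast
  define d where "d = max c 0"
  have ev: "eventually (\<lambda>\<theta>. ereal (measure (cond_U p \<theta>) {u. k < \<bar>u\<bar>}) < c) at_infinity"
    by (rule Limsup_lessD[OF c(1)])
  then obtain b where b: "\<And>x. b \<le> norm x \<Longrightarrow> ereal (measure (cond_U p x) {u. k < \<bar>u\<bar>}) < c"
    unfolding eventually_at_infinity by blast
  have d: "0 \<le> d" "d < 1" using c(2) unfolding d_def by auto
  then obtain dr where dr: "d = ereal dr" by (cases d) auto
  have dr': "0 \<le> dr" "dr < 1" using d dr by auto
  have tight: "1 - dr \<le> measure (cond_U p t) {u. \<bar>u\<bar> \<le> k}" if "b \<le> \<bar>t\<bar>" for t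
  proof -
    interpret prob_space "cond_U p t" by (rule cU_prob)
    have "ereal (measure (cond_U p t) {u. k < \<bar>u\<bar>}) < c" using b[of t] that by simp
    then have "ereal (measure (cond_U p t) {u. k < \<bar>u\<bar>}) < d" unfolding d_def by (simp add: less_max_iff_disj)
    then have lt: "measure (cond_U p t) {u. k < \<bar>u\<bar>} < dr" using dr by simp
    have sp: "space (cond_U p t) = UNIV" by (simp add: cU_eq)
    have "{u. k < \<bar>u\<bar>} \<in> sets borel" by measurable
    then have Ae: "{u. k < \<bar>u\<bar>} \<in> events" by (simp add: cU_eq)
    have "UNIV - {u. k < \<bar>u\<bar>} = {u. \<bar>u\<bar> \<le> k}" by auto
    then have "prob {u. \<bar>u\<bar> \<le> k} = 1 - prob {u. k < \<bar>u\<bar>}" using prob_compl[OF Ae] sp by simp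
    then show ?thesis using lt by linarith
  qed
  obtain \<epsilon> where eps: "0 < \<epsilon>" "\<epsilon> \<le> 1"
    "\<And>t A. A \<in> sets borel \<Longrightarrow> \<epsilon> * (measure lborel (A \<inter> {-1..1}) / 2) \<le> measure (gibbs_step p t) A"
    using doeblin[OF cont k, of "1 - dr" b] tight dr' by auto
  show ?thesis by (rule ue_of_doeblin[OF eps])
qed

end



theorem mainTheorem1:
  fixes f1 f2 :: "real \<Rightarrow> real" and y :: real
  assumes dens1: "(\<integral>\<^sup>+ x. ennreal (f1 x) \<partial>lborel) = 1"
    and dens2: "(\<integral>\<^sup>+ x. ennreal (f2 x) \<partial>lborel) = 1"
    and sym1: "\<And>x. f1 (- x) = f1 x" and sym2: "\<And>x. f2 (- x) = f2 x"
    and cont1: "continuous_on UNIV f1" and cont2: "continuous_on UNIV f2"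
    and bdd1: "bounded (range f1)" and bdd2: "bounded (range f2)"
    and pos1: "\<And>x. f1 x > 0" and pos2: "\<And>x. f2 x > 0"
    and proper: "(\<integral>\<^sup>+ \<theta>. \<integral>\<^sup>+ x. ennreal (post0 f1 f2 y x \<theta>) \<partial>lborel \<partial>lborel) < \<infinity>"
  shows "(PTIP (post0 f1 f2) \<longrightarrow> uniformly_ergodic (post0 f1 f2 y)) \<and>
         (PTIP (post1 f1 f2) \<longrightarrow> uniformly_ergodic (post1 f1 f2 y))"
proof -
  have m1[measurable]: "f1 \<in> borel_measurable borel" by (rule borel_measurable_continuous_onI[OF cont1])
  have m2[measurable]: "f2 \<in> borel_measurable borel" by (rule borel_measurable_continuous_onI[OF cont2])
  obtain B1 where B1: "\<And>x. f1 x \<le> B1" using bdd1 unfolding bounded_real by (meson abs_le_D1 rangeI)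
  obtain B2 where B2: "\<And>x. f2 x \<le> B2" using bdd2 unfolding bounded_real by (meson abs_le_D1 rangeI)
  define B where "B = max B1 B2"
  have B1': "\<And>x. f1 x \<le> B" and B2': "\<And>x. f2 x \<le> B" using B1 B2 unfolding B_def by (auto intro: max.coboundedI1 max.coboundedI2 order_trans)
  have B0: "0 \<le> B" using B1'[of 0] pos1[of 0] by simp
  have cf1: "continuous_on UNIV (\<lambda>z. f1 (g z))" if "continuous_on UNIV g" for g :: "real \<times> real \<Rightarrow> real"
    by (rule continuous_on_compose2[OF cont1 that]) auto
  have cf2: "continuous_on UNIV (\<lambda>z. f2 (g z))" if "continuous_on UNIV g" for g :: "real \<times> real \<Rightarrow> real"
    by (rule continuous_on_compose2[OF cont2 that]) auto
  have bound_int: "(\<integral>\<^sup>+x. ennreal (a x * b x) \<partial>lborel) \<le> ennreal B"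
    if a: "\<And>x. 0 \<le> a x" "\<And>x. a x \<le> B" and b: "\<And>x. 0 \<le> b x" and bm[measurable]: "b \<in> borel_measurable borel"
      and bi: "(\<integral>\<^sup>+x. ennreal (b x) \<partial>lborel) = 1" for a b :: "real \<Rightarrow> real"
  proof -
    have "(\<integral>\<^sup>+x. ennreal (a x * b x) \<partial>lborel) \<le> (\<integral>\<^sup>+x. ennreal B * ennreal (b x) \<partial>lborel)"
      by (intro nn_integral_mono) (use a b in \<open>simp add: ennreal_mult'[symmetric] B0 ennreal_leI mult_right_mono\<close>)
    also have "\<dots> = ennreal B" by (simp add: nn_integral_cmult bi)
    finally show ?thesis .
  qed
  interpret G0: gsetup "post0 f1 f2 y" B
  proof
    show "(\<lambda>z. post0 f1 f2 y (fst z) (snd z)) \<in> borel_measurable borel"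
      unfolding post0_def by (intro borel_measurable_continuous_onI continuous_intros cf1 cf2)
    show "\<And>u t. 0 < post0 f1 f2 y u t" unfolding post0_def using pos1 pos2 by simp
    show "(\<integral>\<^sup>+u. ennreal (post0 f1 f2 y u t) \<partial>lborel) \<le> ennreal B" for t
      unfolding post0_def
      by (rule bound_int[where b="\<lambda>x. f2 (x - t)"]) (use B1' pos1 pos2 in \<open>auto simp: less_imp_le shift_int dens2\<close>)
    show "(\<integral>\<^sup>+t. ennreal (post0 f1 f2 y u t) \<partial>lborel) \<le> ennreal B" for u
      unfolding post0_def
      by (rule bound_int[where b="\<lambda>t. f2 (u - t)"]) (use B1' pos1 pos2 in \<open>auto simp: less_imp_le refl_int dens2\<close>)
    have "(\<integral>\<^sup>+u. \<integral>\<^sup>+t. ennreal (post0 f1 f2 y u t) \<partial>lborel \<partial>lborel) = (\<integral>\<^sup>+u. ennreal (f1 (y - u)) \<partial>lborel)"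
    proof (rule nn_integral_cong)
      fix u
      have "(\<integral>\<^sup>+t. ennreal (post0 f1 f2 y u t) \<partial>lborel) = (\<integral>\<^sup>+t. ennreal (f1 (y - u)) * ennreal (f2 (u - t)) \<partial>lborel)"
        unfolding post0_def by (intro nn_integral_cong) (use pos1 pos2 in \<open>simp add: ennreal_mult' less_imp_le\<close>)
      also have "\<dots> = ennreal (f1 (y - u))" by (simp add: nn_integral_cmult refl_int dens2)
      finally show "(\<integral>\<^sup>+t. ennreal (post0 f1 f2 y u t) \<partial>lborel) = ennreal (f1 (y - u))" .
    qed
    also have "\<dots> = 1" by (simp add: refl_int dens1)
    finally show "(\<integral>\<^sup>+u. \<integral>\<^sup>+t. ennreal (post0 f1 f2 y u t) \<partial>lborel \<partial>lborel) < \<infinity>" by simp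
  qed
  have p1: "post1 f1 f2 y u t = f1 (y - u - t) * f2 u" for u t unfolding post1_def post0_def by (simp add: diff_diff_eq)
  interpret G1: gsetup "post1 f1 f2 y" B
  proof
    show "(\<lambda>z. post1 f1 f2 y (fst z) (snd z)) \<in> borel_measurable borel"
      unfolding p1 by (intro borel_measurable_continuous_onI continuous_intros cf1 cf2)
    show "\<And>u t. 0 < post1 f1 f2 y u t" unfolding p1 using pos1 pos2 by simp
    show "(\<integral>\<^sup>+u. ennreal (post1 f1 f2 y u t) \<partial>lborel) \<le> ennreal B" for t
      unfolding p1
      by (rule bound_int[where b="\<lambda>u. f2 u"]) (use B1' pos1 pos2 in \<open>auto simp: less_imp_le dens2\<close>)
    have i1: "(\<integral>\<^sup>+t. ennreal (f1 (y - u - t)) \<partial>lborel) = 1" for u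
      using refl_int[OF m1, of "y - u"] dens1 by simp
    show "(\<integral>\<^sup>+t. ennreal (post1 f1 f2 y u t) \<partial>lborel) \<le> ennreal B" for u
    proof -
      have "(\<integral>\<^sup>+t. ennreal (post1 f1 f2 y u t) \<partial>lborel) = (\<integral>\<^sup>+t. ennreal (f2 u) * ennreal (f1 (y - u - t)) \<partial>lborel)"
        unfolding p1 by (intro nn_integral_cong) (use pos1 pos2 in \<open>simp add: ennreal_mult' less_imp_le mult.commute\<close>)
      also have "\<dots> = ennreal (f2 u)" by (simp add: nn_integral_cmult i1)
      also have "\<dots> \<le> ennreal B" using B2' by (simp add: ennreal_leI)
      finally show ?thesis .
    qed
    have "(\<integral>\<^sup>+u. \<integral>\<^sup>+t. ennreal (post1 f1 f2 y u t) \<partial>lborel \<partial>lborel) = (\<integral>\<^sup>+u. ennreal (f2 u) \<partial>lborel)"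
    proof (rule nn_integral_cong)
      fix u
      have "(\<integral>\<^sup>+t. ennreal (post1 f1 f2 y u t) \<partial>lborel) = (\<integral>\<^sup>+t. ennreal (f2 u) * ennreal (f1 (y - u - t)) \<partial>lborel)"
        unfolding p1 by (intro nn_integral_cong) (use pos1 pos2 in \<open>simp add: ennreal_mult' less_imp_le mult.commute\<close>)
      also have "\<dots> = ennreal (f2 u)" by (simp add: nn_integral_cmult i1)
      finally show "(\<integral>\<^sup>+t. ennreal (post1 f1 f2 y u t) \<partial>lborel) = ennreal (f2 u)" .
    qed
    also have "\<dots> = 1" by (rule dens2)
    finally show "(\<integral>\<^sup>+u. \<integral>\<^sup>+t. ennreal (post1 f1 f2 y u t) \<partial>lborel \<partial>lborel) < \<infinity>" by simp
  qed
  have c0: "continuous_on UNIV (\<lambda>z. post0 f1 f2 y (fst z) (snd z))"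
    unfolding post0_def by (intro continuous_intros cf1 cf2)
  have c1: "continuous_on UNIV (\<lambda>z. post1 f1 f2 y (fst z) (snd z))"
    unfolding p1 by (intro continuous_intros cf1 cf2)
  show ?thesis
  proof (intro conjI impI)
    assume "PTIP (post0 f1 f2)"
    then obtain k where "0 < k" "Limsup at_infinity (\<lambda>\<theta>. ereal (measure (cond_U (post0 f1 f2 y) \<theta>) {u. k < \<bar>u\<bar>})) < 1"
      unfolding PTIP_def by blast
    then show "uniformly_ergodic (post0 f1 f2 y)" by (rule G0.ue_of_limsup[OF c0])
  next
    assume "PTIP (post1 f1 f2)"
    then obtain k where "0 < k" "Limsup at_infinity (\<lambda>\<theta>. ereal (measure (cond_U (post1 f1 f2 y) \<theta>) {u. k < \<bar>u\<bar>})) < 1"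
      unfolding PTIP_def by blast
    then show "uniformly_ergodic (post1 f1 f2 y)" by (rule G1.ue_of_limsup[OF c1])
  qed
qed



end
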